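(* Let $r\geq 1$ be an integer. Then $$ \zeta_r(0)=\frac{(-1)^r}{4^r}\binom{2r}{r} \quad\text{and}\quad \zeta^{\star}_r(0)=-\frac{1}{r\,2^{2r-1}}\binom{2r-2}{r-1}. $$
   Context: For an integer $r\geq 1$ and real $s>1$, let $\zeta_r(s):=\sum_{n_1>\cdots>n_r>0}\prod_{i=1}^r n_i^{-s}$ and $\zeta^{\star}_r(s):=\sum_{n_1\geq\cdots\geq n_r\geq 1}\prod_{i=1}^r n_i^{-s}$ (integer summation indices), i.e. the multiple zeta and multiple zeta-star functions at identical arguments $(s,\ldots,s)$. These one-variable functions extend meromorphically to $s\in\mathbb{C}$ (for instance because each equals a polynomial with rational coefficients in $\zeta(s),\zeta(2s),\ldots,\zeta(rs)$, where $\zeta$ is the Riemann zeta function), and $\zeta_r(0)$, $\zeta^{\star}_r(0)$ denote the values of these meromorphic continuations at $s=0$. *)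

theory Defs
  imports "HOL-Complex_Analysis.Complex_Analysis"
begin

definition mzv_idx :: "nat \<Rightarrow> nat list set" where
  "mzv_idx r = {ns. length ns = r \<and> sorted_wrt (>) ns \<and> (\<forall>n\<in>set ns. n > 0)}"

definition mzsv_idx :: "nat \<Rightarrow> nat list set" where
  "mzsv_idx r = {ns. length ns = r \<and> sorted_wrt (\<ge>) ns \<and> (\<forall>n\<in>set ns. n \<ge> 1)}"

text \<open>zeta_r(s) and zeta*_r(s) at identical arguments (s,...,s), as series
  (meaningful for Re s > 1).\<close>
definition mzeta :: "nat \<Rightarrow> complex \<Rightarrow> complex" where
  "mzeta r s = (\<Sum>\<^sub>\<infinity>ns\<in>mzv_idx r. \<Prod>n\<leftarrow>ns. of_nat n powr (-s))"

definition mzeta_star :: "nat \<Rightarrow> complex \<Rightarrow> complex" where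
  "mzeta_star r s = (\<Sum>\<^sub>\<infinity>ns\<in>mzsv_idx r. \<Prod>n\<leftarrow>ns. of_nat n powr (-s))"

text \<open>"The meromorphic continuation of f (given on Re s > 1) takes the value v at 0":
  there is a function holomorphic on a connected open set containing 0 and the
  half-plane Re s > 1, agreeing with f there, with value v at 0. By the identity
  theorem, v is then uniquely determined.\<close>
definition cont_value_at_0 :: "(complex \<Rightarrow> complex) \<Rightarrow> complex \<Rightarrow> bool" where
  "cont_value_at_0 f v \<longleftrightarrow>
     (\<exists>U F. open U \<and> connected U \<and> 0 \<in> U \<and> {s. Re s > 1} \<subseteq> U \<and>
        F holomorphic_on U \<and> (\<forall>s. Re s > 1 \<longrightarrow> F s = f s) \<and> F 0 = v)"

end

theory Submission
  imports Defs
begin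

definition gg :: "nat \<Rightarrow> complex \<Rightarrow> complex" where
  "gg n s = of_nat n powr (-s) - (of_nat (n+1) powr (1-s) - of_nat n powr (1-s)) / (1-s)
     - (of_nat n powr (-s) - of_nat (n+1) powr (-s)) / 2"

lemma powr_nat_succ_split:
  assumes "n > 0"
  shows "(of_nat (n+1) :: complex) powr a = of_nat n powr a * (1 + of_real (1/real n)) powr a"
proof -
  have "(of_nat (n+1) :: complex) = of_nat n * (1 + of_real (1/real n))"
    using assms by (simp add: field_simps)
  also have "\<dots> powr a = of_nat n powr a * (1 + of_real (1/real n)) powr a"
  proof (rule powr_times_real)
    show "(of_nat n :: complex) \<in> \<real>" by (rule Reals_of_nat)
    have "(1 + of_real (1/real n) :: complex) = of_real (1 + 1/real n)" by simp
    then show "(1 + of_real (1/real n) :: complex) \<in> \<real>" by (metis Reals_of_real)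
  qed (auto simp: add_nonneg_nonneg)
  finally show ?thesis .
qed

lemma gg_series:
  assumes n: "n \<ge> 2" and s: "s \<noteq> 1"
  defines "w \<equiv> (of_real (1/real n) :: complex)"
  shows "(\<lambda>i. ((-s) gchoose (i+2)) * w^(i+2) * (1/2 - 1/of_nat (i+3))) sums (gg n s / of_nat n powr (-s))"
proof -
  define a where "a = -s"
  have nw: "norm w < 1" using n by (simp add: w_def norm_divide)
  have w0: "w \<noteq> 0" using n by (simp add: w_def)
  have a1: "a + 1 \<noteq> 0" using s by (auto simp: a_def algebra_simps)
  have S1: "(\<lambda>j. (a gchoose j) * w^j) sums (1 + w) powr a"
    using gen_binomial_complex[OF nw] .
  have S2: "(\<lambda>j. ((a+1) gchoose j) * w^j) sums (1 + w) powr (a+1)"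
    using gen_binomial_complex[OF nw] .
  have "(\<lambda>j. ((a+1) gchoose Suc j) * w^(Suc j)) sums ((1 + w) powr (a+1) - 1)"
    using S2 by (subst sums_Suc_iff) simp
  moreover have "((a+1) gchoose Suc j) * w^(Suc j) = ((a+1) * w) * ((a gchoose j) * w^j / of_nat (Suc j))" for j
  proof -
    have "of_nat (Suc j) * ((a+1) gchoose Suc j) = (a+1) * (a gchoose j)"
      using gbinomial_absorption[of j "a+1"] by simp
    then have "((a+1) gchoose Suc j) = (a+1) * (a gchoose j) / of_nat (Suc j)"
      by (metis nonzero_mult_div_cancel_left of_nat_eq_0_iff nat.distinct(1))
    then show ?thesis by (simp add: field_simps)
  qed
  ultimately have S2': "(\<lambda>j. ((a+1) * w) * ((a gchoose j) * w^j / of_nat (Suc j))) sums ((1 + w) powr (a+1) - 1)"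
    by simp
  have c: "(a+1)*w \<noteq> 0" using a1 w0 by simp
  from sums_divide[OF S2', of "(a+1)*w"]
  have S3: "(\<lambda>j. (a gchoose j) * w^j / of_nat (Suc j)) sums (((1 + w) powr (a+1) - 1) / ((a+1) * w))"
    by (simp only: nonzero_mult_div_cancel_left[OF c])
  have S4: "(\<lambda>j. (a gchoose j) * w^j * (1/2 - 1/of_nat (Suc j))) sums
      ((1 + w) powr a / 2 - ((1 + w) powr (a+1) - 1) / ((a+1) * w))"
    using sums_diff[OF sums_mult2[OF S1, of "1/2"] S3] by (simp add: algebra_simps)
  have sum2: "(\<Sum>i<2. (a gchoose i) * w^i * (1/2 - 1/of_nat (Suc i))) = -1/2"
    by (simp add: numeral_2_eq_2)
  have S5: "(\<lambda>i. (a gchoose (i+2)) * w^(i+2) * (1/2 - 1/of_nat (Suc (i+2)))) sums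
      ((1 + w) powr a / 2 - ((1 + w) powr (a+1) - 1) / ((a+1) * w) + 1/2)"
    using S4 sums_iff_shift[where n=2 and f="\<lambda>i. (a gchoose i) * w^i * (1/2 - 1/of_nat (Suc i))"]
    using sum2 by simp
  have np: "(of_nat n :: complex) powr (-s) \<noteq> 0" using n by simp
  have e1: "of_nat (n+1) powr a = of_nat n powr a * (1 + w) powr a"
    using powr_nat_succ_split[of n a] n by (simp add: w_def)
  have e2: "of_nat (n+1) powr (a+1) = of_nat n powr a * (of_nat n * (1 + w) powr (a+1))"
    using powr_nat_succ_split[of n "a+1"] n by (simp add: w_def powr_add)
  have e3: "(of_nat n :: complex) powr (a+1) = of_nat n powr a * of_nat n"
    using n by (simp add: powr_add)
  have nw1: "of_nat n * w = 1" using n by (simp add: w_def)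
  have "gg n s = of_nat n powr a * ((1 + w) powr a / 2 - ((1 + w) powr (a+1) - 1) / ((a+1) * w) + 1/2)"
  proof -
    have h1: "1 - s = a + 1" "-s = a" by (simp_all add: a_def)
    have nn: "(of_nat n :: complex) = 1 / w" using nw1 w0 by (simp add: field_simps)
    show ?thesis
      unfolding gg_def h1 e1 e2 e3 unfolding nn using a1 w0
      by (simp add: field_simps)
  qed
  then show ?thesis using S5 np by (simp add: a_def add.commute)
qed

lemma norm_pochhammer_le:
  fixes s :: complex
  assumes "norm s \<le> R"
  shows "norm (pochhammer s j) \<le> pochhammer R j"
proof (induction j)
  case 0 then show ?case by simp
next
  case (Suc j)
  have "norm (s + of_nat j) \<le> R + of_nat j"
    using assms norm_triangle_ineq[of s "of_nat j"] by simp
  then have "norm (pochhammer s j) * norm (s + of_nat j) \<le> pochhammer R j * (R + of_nat j)"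
    using Suc by (intro mult_mono) (auto intro: order_trans[OF norm_ge_zero])
  then show ?case by (simp add: pochhammer_Suc norm_mult)
qed

lemma norm_gchoose_le:
  fixes s :: complex
  assumes "norm s \<le> R"
  shows "norm ((-s) gchoose j) \<le> pochhammer R j / fact j"
proof -
  have "norm ((-s) gchoose j) = norm (pochhammer s j) / fact j"
    by (simp add: gbinomial_pochhammer norm_mult norm_divide norm_power)
  also have "\<dots> \<le> pochhammer R j / fact j"
    using norm_pochhammer_le[OF assms] by (simp add: divide_right_mono)
  finally show ?thesis .
qed

lemma pochhammer_nn: "(R::real) \<ge> 0 \<Longrightarrow> pochhammer R k \<ge> 0"
  by (auto simp: pochhammer_prod intro!: prod_nonneg)

definition KR :: "real \<Rightarrow> real" where
  "KR R = (\<Sum>i. pochhammer R (i+2) / fact (i+2) * (1/2)^i)"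

lemma KR_summable:
  assumes "R \<ge> 0"
  shows "summable (\<lambda>i. pochhammer R (i+2) / fact (i+2) * (1/2::real)^i)"
proof (rule summable_ratio_test[where c="3/4" and N="nat \<lceil>2*R\<rceil>"])
  fix i assume i: "i \<ge> nat \<lceil>2*R\<rceil>"
  have pn: "pochhammer R k \<ge> 0" for k
    using assms by (auto simp: pochhammer_prod intro!: prod_nonneg)
  have p0: "pochhammer R (i+2) / fact (i+2) * (1/2::real)^i \<ge> 0"
    using pn by simp
  have p1: "pochhammer R (Suc i+2) / fact (Suc i+2) * (1/2::real)^(Suc i) \<ge> 0"
    using pn by simp
  have "2*R \<le> real i" using i by linarith
  then have r: "(R + real (i+2)) / real (i+3) * (1/2) \<le> 3/4"
    by (simp add: field_simps)
  have "pochhammer R (Suc i+2) / fact (Suc i+2) * (1/2::real)^(Suc i)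
        = (pochhammer R (i+2) / fact (i+2) * (1/2)^i) * ((R + real (i+2)) / real (i+3) * (1/2))"
    by (simp add: pochhammer_Suc field_simps del: of_nat_Suc) (simp add: algebra_simps)
  also have "\<dots> \<le> (pochhammer R (i+2) / fact (i+2) * (1/2)^i) * (3/4)"
    using r p0 by (intro mult_left_mono) auto
  finally show "norm (pochhammer R (Suc i+2) / fact (Suc i+2) * (1/2::real)^(Suc i))
      \<le> 3/4 * norm (pochhammer R (i+2) / fact (i+2) * (1/2::real)^i)"
    using p0 p1 by (simp only: real_norm_def abs_of_nonneg) (simp add: mult.commute)
qed simp

lemma gg_bound0:
  assumes n: "n \<ge> 2" and s: "s \<noteq> 1" and R: "norm s \<le> R"
  shows "norm (gg n s) \<le> norm (of_nat n powr (-s)) * ((1/real n)^2 * KR R)"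
proof -
  define w where "w = (of_real (1/real n) :: complex)"
  have R0: "R \<ge> 0" using R norm_ge_zero order_trans by blast
  have np: "(of_nat n :: complex) powr (-s) \<noteq> 0" using n by simp
  from gg_series[OF n s] have S: "(\<lambda>i. ((-s) gchoose (i+2)) * w^(i+2) * (1/2 - 1/of_nat (i+3))) sums (gg n s / of_nat n powr (-s))"
    unfolding w_def .
  have bnd: "norm (((-s) gchoose (i+2)) * w^(i+2) * (1/2 - 1/of_nat (i+3)))
      \<le> (1/real n)^2 * (pochhammer R (i+2) / fact (i+2) * (1/2)^i)" for i
  proof -
    have a: "norm ((-s) gchoose (i+2)) \<le> pochhammer R (i+2) / fact (i+2)"
      by (rule norm_gchoose_le[OF R])
    have b: "norm (w^(i+2)) \<le> (1/real n)^2 * (1/2)^i"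
    proof -
      have nw: "norm w = 1/real n" by (simp add: w_def norm_divide)
      have "norm (w^(i+2)) = (1/real n)^2 * (1/real n)^i"
        unfolding norm_power nw by (simp add: power_add power2_eq_square)
      also have "\<dots> \<le> (1/real n)^2 * (1/2)^i"
        using n by (intro mult_left_mono power_mono) (auto simp: field_simps)
      finally show ?thesis .
    qed
    have c: "norm (1/2 - 1/(of_nat (i+3)::complex)) \<le> 1"
    proof -
      have "norm (1/2 - 1/(of_nat (i+3)::complex)) \<le> norm (1/2::complex) + norm (1/(of_nat (i+3)::complex))"
        by (rule norm_triangle_ineq4)
      also have "\<dots> \<le> 1"
      proof -
        have "norm (1/(of_nat (i+3)::complex)) = 1 / real (i+3)"
          by (simp only: norm_divide norm_one norm_of_nat)
        also have "\<dots> \<le> 1/2" by (simp add: field_simps)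
        finally show ?thesis by (simp add: norm_divide)
      qed
      finally show ?thesis .
    qed
    have "norm (((-s) gchoose (i+2)) * w^(i+2) * (1/2 - 1/of_nat (i+3)))
       \<le> (pochhammer R (i+2) / fact (i+2)) * ((1/real n)^2 * (1/2)^i) * 1"
      unfolding norm_mult
      by (intro mult_mono a b c) (auto intro!: divide_nonneg_nonneg mult_nonneg_nonneg pochhammer_nn R0)
    then show ?thesis by (simp add: algebra_simps)
  qed
  have sm: "summable (\<lambda>i. (1/real n)^2 * (pochhammer R (i+2) / fact (i+2) * (1/2::real)^i))"
    by (intro summable_mult KR_summable R0)
  have "norm (gg n s / of_nat n powr (-s)) \<le> (\<Sum>i. (1/real n)^2 * (pochhammer R (i+2) / fact (i+2) * (1/2::real)^i))"
    using norm_suminf_le[OF bnd sm] S by (simp add: sums_iff)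
  also have "\<dots> = (1/real n)^2 * KR R"
    unfolding KR_def by (rule suminf_mult[OF KR_summable[OF R0]])
  finally have "norm (gg n s / of_nat n powr (-s)) \<le> (1/real n)^2 * KR R" .
  then show ?thesis using np by (simp add: norm_divide field_simps)
qed


lemma KR_nonneg: "R \<ge> 0 \<Longrightarrow> KR R \<ge> 0"
  unfolding KR_def
  by (rule suminf_nonneg[OF KR_summable]) (auto intro!: mult_nonneg_nonneg divide_nonneg_nonneg pochhammer_nn)

lemma norm_nat_powr: "norm ((of_nat n :: complex) powr s) = real n powr Re s"
  using norm_powr_real_powr[of "of_nat n" s] by simp

lemma gg_bound:
  assumes n: "n \<ge> 2" and s: "s \<noteq> 1" and R: "norm s \<le> R" and re: "Re s \<ge> -1/2"
  shows "norm (gg n s) \<le> KR R * real n powr (-3/2)"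
proof -
  have R0: "R \<ge> 0" using R norm_ge_zero order_trans by blast
  have K0: "KR R \<ge> 0" using KR_nonneg[OF R0] .
  have "norm (of_nat n powr (-s) :: complex) = real n powr (- Re s)"
    using norm_nat_powr[of n "-s"] by simp
  also have "\<dots> \<le> real n powr (1/2)"
    using n re by (intro powr_mono) auto
  finally have a: "norm (of_nat n powr (-s) :: complex) \<le> real n powr (1/2)" .
  have "norm (gg n s) \<le> norm (of_nat n powr (-s)) * ((1/real n)^2 * KR R)"
    by (rule gg_bound0[OF n s R])
  also have "\<dots> \<le> real n powr (1/2) * ((1/real n)^2 * KR R)"
    using a K0 by (intro mult_right_mono) auto
  also have "real n powr (1/2) * (1/real n)^2 = real n powr (-3/2)"
  proof -
    have np: "real n > 0" using n by simp
    have "(1/real n)^2 = inverse (real n powr 2)"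
      using np by (simp add: power_one_over divide_inverse power_inverse)
    also have "\<dots> = real n powr (-2)" by (simp add: powr_minus)
    finally have "(1/real n)^2 = real n powr (-2)" .
    then have "real n powr (1/2) * (1/real n)^2 = real n powr (1/2 + -2)"
      by (simp only: powr_add)
    also have "(1/2 + -2 :: real) = -3/2" by simp
    finally show ?thesis .
  qed
  then have "real n powr (1/2) * ((1/real n)^2 * KR R) = KR R * real n powr (-3/2)"
    by (simp add: algebra_simps)
  finally show ?thesis .
qed


lemma numeral_plus_nat_nz: "(numeral k + of_nat i :: complex) \<noteq> 0"
proof -
  have "(numeral k + of_nat i :: complex) = of_nat (numeral k + i)" by simp
  also have "\<dots> \<noteq> 0" by (simp only: of_nat_eq_0_iff) simp
  finally show ?thesis .
qed

definition Zc :: "complex \<Rightarrow> complex" where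
  "Zc s = 1 + 2 powr (1-s) / (s-1) + 2 powr (-s) / 2 + (\<Sum>i. gg (i+2) s)"

definition DZ :: "complex set" where "DZ = {s. Re s > -1/2} - {1}"

lemma open_DZ: "open DZ"
  unfolding DZ_def by (intro open_Diff open_halfspace_Re_gt) auto

lemma gg_hol: "gg n holomorphic_on DZ"
  unfolding gg_def[abs_def] DZ_def by (intro holomorphic_intros) auto

lemma sum_gg_hol: "(\<lambda>s. \<Sum>i. gg (i+2) s) holomorphic_on DZ"
proof (rule holomorphic_uniform_sequence[OF open_DZ])
  show "(\<lambda>s. \<Sum>i<m. gg (i+2) s) holomorphic_on DZ" for m
    by (intro holomorphic_intros gg_hol)
  fix x assume x: "x \<in> DZ"
  obtain e where e: "e > 0" "cball x e \<subseteq> DZ"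
    using open_contains_cball open_DZ x by blast
  have sm: "summable (\<lambda>i. KR (norm x + e) * real (i+2) powr (-3/2))"
  proof -
    have "summable (\<lambda>i. real i powr (-3/2))"
      by (subst summable_real_powr_iff) auto
    then have "summable (\<lambda>i. real (i+2) powr (-3/2))"
      using summable_iff_shift[of "\<lambda>i. real i powr (-3/2)" 2] by simp
    then show ?thesis by (rule summable_mult)
  qed
  have "uniform_limit (cball x e) (\<lambda>m s. \<Sum>i<m. gg (i+2) s) (\<lambda>s. \<Sum>i. gg (i+2) s) sequentially"
  proof (rule Weierstrass_m_test[OF _ sm])
    fix i s assume s: "s \<in> cball x e"
    then have sD: "s \<in> DZ" using e by auto
    have "norm s \<le> norm x + e"
      using s norm_triangle_ineq2[of s x] by (auto simp: dist_norm norm_minus_commute)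
    then show "norm (gg (i+2) s) \<le> KR (norm x + e) * real (i+2) powr (-3/2)"
      using sD by (intro gg_bound) (auto simp: DZ_def)
  qed
  then show "\<exists>d>0. cball x d \<subseteq> DZ \<and> uniform_limit (cball x d) (\<lambda>m s. \<Sum>i<m. gg (i+2) s) (\<lambda>s. \<Sum>i. gg (i+2) s) sequentially"
    using e by blast
qed

lemma Zc_hol: "Zc holomorphic_on DZ"
proof -
  have "(\<lambda>s. 1 + 2 powr (1-s) / (s-1) + 2 powr (-s) / 2 + (\<Sum>i. gg (i+2) s)) holomorphic_on DZ"
    by (intro holomorphic_intros sum_gg_hol) (auto simp: DZ_def)
  then show ?thesis unfolding Zc_def[abs_def] .
qed

lemma Zc_0: "Zc 0 = -1/2"
proof -
  have "gg (i+2) 0 = 0" for i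
    unfolding gg_def by (simp add: powr_one numeral_plus_nat_nz)
  then show ?thesis unfolding Zc_def by simp
qed

lemma zeta_summable:
  assumes "Re s > 1"
  shows "summable (\<lambda>n. (of_nat n :: complex) powr (-s))"
proof (rule summable_norm_cancel)
  have "summable (\<lambda>n. real n powr (- Re s))"
    using assms by (subst summable_real_powr_iff) auto
  moreover have "norm ((of_nat n :: complex) powr (-s)) = real n powr (- Re s)" for n
    using norm_nat_powr[of n "-s"] by simp
  ultimately show "summable (\<lambda>n. norm ((of_nat n :: complex) powr (-s)))" by simp
qed

lemma tendsto_powr_nat_zero:
  assumes "Re a < 0"
  shows "(\<lambda>m. (of_nat (m+2) :: complex) powr a) \<longlonglongrightarrow> 0"
proof -
  have l0: "(\<lambda>m. real m powr Re a) \<longlonglongrightarrow> 0"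
    by (rule tendsto_neg_powr[OF assms filterlim_real_sequentially])
  have "(\<lambda>m. real (m+2) powr Re a) \<longlonglongrightarrow> 0"
    using LIMSEQ_ignore_initial_segment[OF l0, of 2] by simp
  moreover have "norm ((of_nat (m+2) :: complex) powr a) = real (m+2) powr Re a" for m
    by (rule norm_nat_powr)
  ultimately show ?thesis
    by (subst tendsto_norm_zero_iff[symmetric]) simp
qed

lemma Zc_eq:
  assumes s: "Re s > 1"
  shows "Zc s = (\<Sum>n. (of_nat n :: complex) powr (-s))"
proof -
  define f where "f n = (of_nat n :: complex) powr (-s)" for n
  define A where "A n = (of_nat n :: complex) powr (1-s)" for n
  have s1: "s \<noteq> 1" using s by auto
  have sm: "summable f" unfolding f_def by (rule zeta_summable[OF s])
  define Z where "Z = suminf f"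
  have "(\<lambda>i. f (i+2)) sums (Z - (\<Sum>i<2. f i))"
    using sm sums_iff_shift[of f 2 "Z - (\<Sum>i<2. f i)"] by (simp add: Z_def summable_sums)
  moreover have "(\<Sum>i<2. f i) = 1" by (simp add: f_def numeral_2_eq_2)
  ultimately have L1: "(\<lambda>m. \<Sum>i<m. f (i+2)) \<longlonglongrightarrow> Z - 1" by (simp add: sums_def)
  have L2: "(\<lambda>m. A (m+2)) \<longlonglongrightarrow> 0" unfolding A_def
    by (rule tendsto_powr_nat_zero) (use s in simp)
  have L3: "(\<lambda>m. f (m+2)) \<longlonglongrightarrow> 0" unfolding f_def
    by (rule tendsto_powr_nat_zero) (use s in simp)
  have ps: "(\<Sum>i<m. gg (i+2) s) = (\<Sum>i<m. f (i+2)) - (A (m+2) - A 2) / (1-s) - (f 2 - f (m+2)) / 2" for m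
  proof -
    have "(\<Sum>i<m. gg (i+2) s) = (\<Sum>i<m. f (i+2) - (A (Suc i + 2) - A (i+2)) / (1-s) - (f (i+2) - f (Suc i+2)) / 2)"
      by (intro sum.cong) (simp_all add: gg_def f_def A_def add_ac)
    also have "\<dots> = (\<Sum>i<m. f (i+2)) - (\<Sum>i<m. A (Suc i + 2) - A (i+2)) / (1-s) - (\<Sum>i<m. f (i+2) - f (Suc i+2)) / 2"
      by (simp only: sum_subtractf[symmetric] sum_divide_distrib)
    also have "(\<Sum>i<m. A (Suc i + 2) - A (i+2)) = A (m+2) - A 2"
      using sum_lessThan_telescope[of "\<lambda>i. A (i+2)" m] by (simp add: numeral_2_eq_2)
    also have "(\<Sum>i<m. f (i+2) - f (Suc i+2)) = f 2 - f (m+2)"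
      using sum_lessThan_telescope'[of "\<lambda>i. f (i+2)" m] by (simp add: numeral_2_eq_2)
    finally show ?thesis .
  qed
  have "(\<lambda>m. \<Sum>i<m. gg (i+2) s) \<longlonglongrightarrow> (Z - 1) - (0 - A 2) / (1-s) - (f 2 - 0) / 2"
    unfolding ps by (intro tendsto_intros L1 L2 L3) (use s1 in auto)
  then have "(\<lambda>i. gg (i+2) s) sums ((Z - 1) - (0 - A 2) / (1-s) - (f 2 - 0) / 2)"
    by (simp only: sums_def)
  then have "(\<Sum>i. gg (i+2) s) = (Z - 1) - (0 - A 2) / (1-s) - (f 2 - 0) / 2"
    by (rule sums_unique[symmetric])
  then have "Zc s = Z + A 2 / (s - 1) + A 2 / (1 - s)"
    unfolding Zc_def by (simp add: A_def f_def)
  moreover have "A 2 / (s - 1) + A 2 / (1 - s) = 0"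
    using s1 by (simp add: field_simps)
  ultimately have "Zc s = Z" by (simp add: add.assoc)
  then show ?thesis unfolding Z_def f_def[abs_def] .
qed


fun Pe :: "(nat \<Rightarrow> complex) \<Rightarrow> nat \<Rightarrow> complex" where
  "Pe p 0 = 1"
| "Pe p (Suc r) = (\<Sum>k\<le>r. (-1)^k * p (Suc k) * Pe p (r - k)) / of_nat (Suc r)"

fun Ph :: "(nat \<Rightarrow> complex) \<Rightarrow> nat \<Rightarrow> complex" where
  "Ph p 0 = 1"
| "Ph p (Suc r) = (\<Sum>k\<le>r. p (Suc k) * Ph p (r - k)) / of_nat (Suc r)"

lemma Pe_newton: "of_nat (Suc r) * Pe p (Suc r) = (\<Sum>k\<le>r. (-1)^k * p (Suc k) * Pe p (r - k))"
  by (simp del: of_nat_Suc)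

lemma Ph_newton: "of_nat (Suc r) * Ph p (Suc r) = (\<Sum>k\<le>r. p (Suc k) * Ph p (r - k))"
  by (simp del: of_nat_Suc)

lemma Ph_newton': "of_nat r * Ph p r = (\<Sum>k<r. p (Suc k) * Ph p (r - 1 - k))"
  by (cases r) (simp_all only: Ph_newton lessThan_Suc_atMost, simp_all)

lemma Pe_newton': "of_nat r * Pe p r = (\<Sum>k<r. (-1)^k * p (Suc k) * Pe p (r - 1 - k))"
  by (cases r) (simp_all only: Pe_newton lessThan_Suc_atMost, simp_all)

lemma Pe_shift:
  fixes p :: "nat \<Rightarrow> complex" and x :: complex
  defines "p' \<equiv> (\<lambda>k. p k + x^k)"
  shows "Pe p' (Suc r) = Pe p (Suc r) + x * Pe p r"
proof (induction r rule: less_induct)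
  case (less r)
  define A where "A = Pe p'"
  define B where "B = Pe p"
  have AB: "A j = B j + (if j = 0 then 0 else x * B (j - 1))" if "j \<le> r" for j
  proof (cases j)
    case 0 then show ?thesis by (simp add: A_def B_def)
  next
    case (Suc m)
    then have "m < r" using that by simp
    then show ?thesis using less.IH[of m] Suc by (simp add: A_def B_def)
  qed
  have "of_nat (Suc r) * A (Suc r) = (\<Sum>k\<le>r. (-1)^k * p' (Suc k) * A (r - k))"
    unfolding A_def by (rule Pe_newton)
  also have "\<dots> = (\<Sum>k\<le>r. (-1)^k * p (Suc k) * B (r - k))
      + (\<Sum>k\<le>r. (-1)^k * p (Suc k) * (if r - k = 0 then 0 else x * B (r - k - 1)))
      + (\<Sum>k\<le>r. (-1)^k * x^(Suc k) * B (r - k))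
      + (\<Sum>k\<le>r. (-1)^k * x^(Suc k) * (if r - k = 0 then 0 else x * B (r - k - 1)))"
    by (simp add: AB p'_def sum.distrib[symmetric] algebra_simps)
  also have "(\<Sum>k\<le>r. (-1)^k * p (Suc k) * B (r - k)) = of_nat (Suc r) * B (Suc r)"
    unfolding B_def by (rule Pe_newton[symmetric])
  also have "(\<Sum>k\<le>r. (-1)^k * p (Suc k) * (if r - k = 0 then 0 else x * B (r - k - 1)))
      = x * (of_nat r * B r)"
  proof -
    have "(\<Sum>k\<le>r. (-1)^k * p (Suc k) * (if r - k = 0 then 0 else x * B (r - k - 1)))
        = (\<Sum>k<r. x * ((-1)^k * p (Suc k) * B (r - 1 - k)))"
      by (cases r) (auto simp: lessThan_Suc_atMost[symmetric] intro!: sum.cong simp: Suc_diff_le algebra_simps)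
    also have "\<dots> = x * (of_nat r * B r)"
      unfolding B_def Pe_newton' by (simp add: sum_distrib_left)
    finally show ?thesis .
  qed
  also have "(\<Sum>k\<le>r. (-1)^k * x^(Suc k) * B (r - k))
       = x * B r - (\<Sum>k<r. (-1)^k * x^(Suc (Suc k)) * B (r - 1 - k))"
  proof (cases r)
    case 0 then show ?thesis by simp
  next
    case (Suc m)
    have "(\<Sum>k\<le>Suc m. (-1)^k * x^(Suc k) * B (Suc m - k))
       = x * B (Suc m) + (\<Sum>k\<le>m. (-1)^(Suc k) * x^(Suc (Suc k)) * B (m - k))"
      by (subst sum.atMost_Suc_shift) simp
    also have "(\<Sum>k\<le>m. (-1)^(Suc k) * x^(Suc (Suc k)) * B (m - k))
       = - (\<Sum>k\<le>m. (-1)^k * x^(Suc (Suc k)) * B (m - k))"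
      by (simp add: sum_negf[symmetric])
    finally show ?thesis unfolding Suc lessThan_Suc_atMost diff_Suc_1 by simp
  qed
  also have "(\<Sum>k\<le>r. (-1)^k * x^(Suc k) * (if r - k = 0 then 0 else x * B (r - k - 1)))
       = (\<Sum>k<r. (-1)^k * x^(Suc (Suc k)) * B (r - 1 - k))"
    by (cases r) (auto simp: lessThan_Suc_atMost[symmetric] intro!: sum.cong simp: Suc_diff_le algebra_simps)
  finally have "of_nat (Suc r) * A (Suc r) = of_nat (Suc r) * (B (Suc r) + x * B r)"
    by (simp add: algebra_simps)
  then show ?case unfolding A_def B_def by (simp del: of_nat_Suc Pe.simps)
qed

lemma Ph_shift:
  fixes p :: "nat \<Rightarrow> complex" and x :: complex
  defines "p' \<equiv> (\<lambda>k. p k + x^k)"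
  shows "Ph p' (Suc r) = Ph p (Suc r) + x * Ph p' r"
proof (induction r rule: less_induct)
  case (less r)
  define A where "A = Ph p'"
  define B where "B = Ph p"
  have AB: "A j = B j + (if j = 0 then 0 else x * A (j - 1))" if "j \<le> r" for j
  proof (cases j)
    case 0 then show ?thesis by (simp add: A_def B_def)
  next
    case (Suc m)
    then have "m < r" using that by simp
    then show ?thesis using less.IH[of m] Suc by (simp add: A_def B_def)
  qed
  define U where "U = (\<Sum>k<r. x^(Suc k) * A (r - 1 - k))"
  have "of_nat (Suc r) * A (Suc r) = (\<Sum>k\<le>r. p' (Suc k) * A (r - k))"
    unfolding A_def by (rule Ph_newton)
  also have "\<dots> = (\<Sum>k\<le>r. p (Suc k) * B (r - k))
      + (\<Sum>k\<le>r. p (Suc k) * (if r - k = 0 then 0 else x * A (r - k - 1)))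
      + (\<Sum>k\<le>r. x^(Suc k) * A (r - k))"
  proof -
    have "(\<Sum>k\<le>r. p' (Suc k) * A (r - k)) = (\<Sum>k\<le>r. p (Suc k) * A (r - k) + x^(Suc k) * A (r - k))"
      by (simp add: p'_def algebra_simps)
    also have "\<dots> = (\<Sum>k\<le>r. p (Suc k) * (B (r - k) + (if r - k = 0 then 0 else x * A (r - k - 1)))
        + x^(Suc k) * A (r - k))"
      by (intro sum.cong refl) (simp add: AB)
    finally show ?thesis by (simp add: sum.distrib algebra_simps)
  qed
  also have "(\<Sum>k\<le>r. p (Suc k) * B (r - k)) = of_nat (Suc r) * B (Suc r)"
    unfolding B_def by (rule Ph_newton[symmetric])
  also have "(\<Sum>k\<le>r. p (Suc k) * (if r - k = 0 then 0 else x * A (r - k - 1)))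
      = x * (of_nat r * A r - U)"
  proof -
    have "(\<Sum>k\<le>r. p (Suc k) * (if r - k = 0 then 0 else x * A (r - k - 1)))
        = x * (\<Sum>k<r. p (Suc k) * A (r - 1 - k))"
      by (cases r) (auto simp: lessThan_Suc_atMost[symmetric] sum_distrib_left intro!: sum.cong simp: Suc_diff_le algebra_simps)
    also have "(\<Sum>k<r. p (Suc k) * A (r - 1 - k)) = (\<Sum>k<r. p' (Suc k) * A (r - 1 - k)) - U"
      unfolding U_def by (simp add: p'_def algebra_simps sum.distrib)
    also have "(\<Sum>k<r. p' (Suc k) * A (r - 1 - k)) = of_nat r * A r"
      unfolding A_def by (rule Ph_newton'[symmetric])
    finally show ?thesis .
  qed
  also have "(\<Sum>k\<le>r. x^(Suc k) * A (r - k)) = x * A r + x * U"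
  proof (cases r)
    case 0 then show ?thesis by (simp add: U_def)
  next
    case (Suc m)
    have "(\<Sum>k\<le>Suc m. x^(Suc k) * A (Suc m - k))
       = x * A (Suc m) + (\<Sum>k\<le>m. x^(Suc (Suc k)) * A (m - k))"
      by (subst sum.atMost_Suc_shift) simp
    then show ?thesis unfolding Suc U_def lessThan_Suc_atMost diff_Suc_1
      by (simp add: sum_distrib_left algebra_simps)
  qed
  finally have "of_nat (Suc r) * A (Suc r) = of_nat (Suc r) * (B (Suc r) + x * A r)"
    by (simp add: algebra_simps)
  then show ?case unfolding A_def B_def by (simp del: of_nat_Suc Ph.simps)
qed

lemma sum_atMost_rev: "(\<Sum>k\<le>r. f (r - k)) = (\<Sum>k\<le>(r::nat). f k)"
  by (rule sum.reindex_bij_witness[where i="\<lambda>k. r - k" and j="\<lambda>k. r - k"]) auto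

lemma cb_ratio_nat: "Suc n * ((2 * Suc n) choose Suc n) = 2 * (2*n+1) * ((2*n) choose n)"
proof -
  have a: "Suc n * (Suc (2*n+1) choose Suc n) = Suc (2*n+1) * ((2*n+1) choose n)"
    by (rule Suc_times_binomial)
  have b: "(2*n+1) choose n = (2*n+1) choose (Suc n)"
    using binomial_symmetric[of n "2*n+1"] by simp
  have c: "Suc n * (Suc (2*n) choose Suc n) = Suc (2*n) * ((2*n) choose n)"
    by (rule Suc_times_binomial)
  have "Suc n * (Suc n * ((2 * Suc n) choose Suc n)) = Suc n * (2 * (2*n+1) * ((2*n) choose n))"
  proof -
    have "Suc n * (Suc n * ((2 * Suc n) choose Suc n)) = Suc n * (Suc (2*n+1) * ((2*n+1) choose Suc n))"
      using a b by (simp add: mult_2)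
    also have "\<dots> = Suc (2*n+1) * (Suc n * (Suc (2*n) choose Suc n))"
      by (simp add: algebra_simps)
    also have "\<dots> = Suc (2*n+1) * (Suc (2*n) * ((2*n) choose n))"
      by (subst c) (rule refl)
    also have "\<dots> = Suc n * (2 * (2*n+1) * ((2*n) choose n))"
      by (simp add: algebra_simps)
    finally show ?thesis .
  qed
  then show ?thesis by (metis Zero_not_Suc mult_left_cancel)
qed

definition cb :: "nat \<Rightarrow> complex" where
  "cb n = of_nat ((2*n) choose n) / 4^n"

lemma cb_ratio: "of_nat (Suc n) * cb (Suc n) * 2 = of_nat (2*n+1) * cb n"
proof -
  have "(of_nat (Suc n * ((2 * Suc n) choose Suc n)) :: complex) = of_nat (2 * (2*n+1) * ((2*n) choose n))"
    by (subst cb_ratio_nat) (rule refl)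
  then have "of_nat (Suc n) * of_nat ((2 * Suc n) choose Suc n) = (2 * of_nat (2*n+1) * of_nat ((2*n) choose n) :: complex)"
    by (simp only: of_nat_mult of_nat_numeral)
  then show ?thesis unfolding cb_def by (simp add: field_simps del: of_nat_Suc)
qed

lemma cb_sum: "(\<Sum>j\<le>r. cb j) = 2 * of_nat (Suc r) * cb (Suc r)"
proof (induction r)
  case 0 then show ?case by (simp add: cb_def)
next
  case (Suc r)
  have "(\<Sum>j\<le>Suc r. cb j) = 2 * of_nat (Suc r) * cb (Suc r) + cb (Suc r)"
    using Suc by simp
  also have "\<dots> = of_nat (2 * Suc r + 1) * cb (Suc r)" by (simp add: algebra_simps)
  also have "\<dots> = 2 * of_nat (Suc (Suc r)) * cb (Suc (Suc r))"
    using cb_ratio[of "Suc r"] by (simp add: algebra_simps)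
  finally show ?case .
qed

lemma Pe_const: "Pe (\<lambda>_. -1/2) r = (-1)^r * cb r"
proof (induction r rule: less_induct)
  case (less r)
  show ?case
  proof (cases r)
    case 0 then show ?thesis by (simp add: cb_def)
  next
    case (Suc m)
    have "of_nat (Suc m) * Pe (\<lambda>_. -1/2) (Suc m) = (\<Sum>k\<le>m. (-1)^k * (-1/2) * Pe (\<lambda>_. -1/2) (m - k))"
      by (rule Pe_newton)
    also have "\<dots> = (\<Sum>k\<le>m. (-1/2) * (-1)^m * cb (m - k))"
    proof (intro sum.cong refl)
      fix k assume k: "k \<in> {..m}"
      have "Pe (\<lambda>_. -1/2) (m - k) = (-1)^(m-k) * cb (m - k)"
        using less.IH[of "m - k"] Suc by simp
      moreover have "(-1::complex)^k * (-1)^(m-k) = (-1)^m"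
        using k by (simp add: power_add[symmetric])
      ultimately show "(-1)^k * (-1/2) * Pe (\<lambda>_. -1/2) (m - k) = (-1/2) * (-1)^m * cb (m - k)"
        by (metis (no_types, lifting) mult.assoc mult.left_commute)
    qed
    also have "\<dots> = (-1/2) * (-1)^m * (\<Sum>k\<le>m. cb k)"
      by (simp only: sum_distrib_left[symmetric] sum_atMost_rev[of cb m])
    also have "\<dots> = of_nat (Suc m) * ((-1)^(Suc m) * cb (Suc m))"
      by (simp add: cb_sum del: of_nat_Suc)
    finally have "of_nat (Suc m) * Pe (\<lambda>_. -1/2) (Suc m) = of_nat (Suc m) * ((-1)^(Suc m) * cb (Suc m))" .
    moreover have nz: "(of_nat (Suc m)::complex) \<noteq> 0" by (simp only: of_nat_eq_0_iff Zero_not_Suc not_False_eq_True)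
    ultimately show ?thesis using Suc mult_left_cancel[OF nz] by blast
  qed
qed

definition Hc :: "nat \<Rightarrow> complex" where
  "Hc r = (if r = 0 then 1 else - cb (r - 1) / (2 * of_nat r))"

lemma Hc_sum: "(\<Sum>j\<le>r. Hc j) = cb r"
proof (induction r)
  case 0 then show ?case by (simp add: cb_def Hc_def)
next
  case (Suc r)
  have "(\<Sum>j\<le>Suc r. Hc j) = (\<Sum>j\<le>r. Hc j) + Hc (Suc r)" by simp
  also have "\<dots> = cb r - cb r / (2 * of_nat (Suc r))"
    using Suc by (simp add: Hc_def del: of_nat_Suc)
  also have "\<dots> = cb (Suc r)"
    using cb_ratio[of r] by (simp add: field_simps del: of_nat_Suc) (simp add: algebra_simps)
  finally show ?case .
qed

lemma Ph_const: "Ph (\<lambda>_. -1/2) r = Hc r"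
proof (induction r rule: less_induct)
  case (less r)
  show ?case
  proof (cases r)
    case 0 then show ?thesis by (simp add: Hc_def)
  next
    case (Suc m)
    have "of_nat (Suc m) * Ph (\<lambda>_. -1/2) (Suc m) = (\<Sum>k\<le>m. (-1/2) * Ph (\<lambda>_. -1/2) (m - k))"
      by (rule Ph_newton)
    also have "\<dots> = (\<Sum>k\<le>m. (-1/2) * Hc (m - k))"
      using less.IH Suc by (intro sum.cong refl) simp
    also have "\<dots> = (-1/2) * (\<Sum>k\<le>m. Hc k)"
      by (simp only: sum_distrib_left[symmetric] sum_atMost_rev[of Hc m])
    also have "\<dots> = of_nat (Suc m) * Hc (Suc m)"
      by (simp only: Hc_sum) (simp add: Hc_def del: of_nat_Suc)
    finally have "of_nat (Suc m) * Ph (\<lambda>_. -1/2) (Suc m) = of_nat (Suc m) * Hc (Suc m)" .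
    moreover have nz: "(of_nat (Suc m)::complex) \<noteq> 0" by (simp only: of_nat_eq_0_iff Zero_not_Suc not_False_eq_True)
    ultimately show ?thesis using Suc mult_left_cancel[OF nz] by blast
  qed
qed


definition Tr :: "nat \<Rightarrow> nat \<Rightarrow> nat list set" where
  "Tr r N = mzv_idx r \<inter> {ns. \<forall>n\<in>set ns. n \<le> N}"
definition Sr :: "nat \<Rightarrow> nat \<Rightarrow> nat list set" where
  "Sr r N = mzsv_idx r \<inter> {ns. \<forall>n\<in>set ns. n \<le> N}"

lemma finite_bounded_lists: "finite ((A::nat list set) \<inter> {ns. length ns = r} \<inter> {ns. \<forall>n\<in>set ns. n \<le> N})"
  by (rule finite_subset[OF _ finite_lists_length_eq[OF finite_atMost[of "N::nat"], of r]]) auto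

lemma finite_Tr: "finite (Tr r N)"
proof -
  have "Tr r N = mzv_idx r \<inter> {ns. length ns = r} \<inter> {ns. \<forall>n\<in>set ns. n \<le> N}"
    by (auto simp: Tr_def mzv_idx_def)
  then show ?thesis using finite_bounded_lists by simp
qed

lemma finite_Sr: "finite (Sr r N)"
proof -
  have "Sr r N = mzsv_idx r \<inter> {ns. length ns = r} \<inter> {ns. \<forall>n\<in>set ns. n \<le> N}"
    by (auto simp: Sr_def mzsv_idx_def)
  then show ?thesis using finite_bounded_lists by simp
qed

lemma Tr_0: "Tr 0 N = {[]}"
  by (auto simp: Tr_def mzv_idx_def)
lemma Sr_0: "Sr 0 N = {[]}"
  by (auto simp: Sr_def mzsv_idx_def)
lemma Tr_Suc_0: "Tr (Suc r) 0 = {}"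
  by (auto simp: Tr_def mzv_idx_def length_Suc_conv)
lemma Sr_Suc_0: "Sr (Suc r) 0 = {}"
  by (auto simp: Sr_def mzsv_idx_def length_Suc_conv)

lemma Tr_Suc_Suc: "Tr (Suc r) (Suc N) = Tr (Suc r) N \<union> (Cons (Suc N)) ` Tr r N"
proof (intro set_eqI iffI)
  fix ns assume "ns \<in> Tr (Suc r) (Suc N)"
  then obtain m ms where ns: "ns = m # ms" and len: "length ms = r"
    and sw: "\<forall>y\<in>set ms. y < m" "sorted_wrt (>) ms" and pos: "m > 0" "\<forall>n\<in>set ms. n > 0"
    and le: "m \<le> Suc N" "\<forall>n\<in>set ms. n \<le> Suc N"
    by (auto simp: Tr_def mzv_idx_def length_Suc_conv)
  show "ns \<in> Tr (Suc r) N \<union> (Cons (Suc N)) ` Tr r N"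
  proof (cases "m = Suc N")
    case True
    then have "ms \<in> Tr r N" using len sw pos by (auto simp: Tr_def mzv_idx_def)
    then show ?thesis using ns True by auto
  next
    case False
    then have "m \<le> N" using le by simp
    then have "\<forall>n\<in>set ns. n \<le> N" using sw ns by fastforce
    then show ?thesis using ns len sw pos by (auto simp: Tr_def mzv_idx_def)
  qed
next
  fix ns assume "ns \<in> Tr (Suc r) N \<union> (Cons (Suc N)) ` Tr r N"
  then show "ns \<in> Tr (Suc r) (Suc N)"
    by (auto simp: Tr_def mzv_idx_def) (auto simp: less_Suc_eq_le intro: le_SucI)
qed

lemma Sr_Suc_Suc: "Sr (Suc r) (Suc N) = Sr (Suc r) N \<union> (Cons (Suc N)) ` Sr r (Suc N)"
proof (intro set_eqI iffI)
  fix ns assume "ns \<in> Sr (Suc r) (Suc N)"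
  then obtain m ms where ns: "ns = m # ms" and len: "length ms = r"
    and sw: "\<forall>y\<in>set ms. y \<le> m" "sorted_wrt (\<ge>) ms" and pos: "m \<ge> 1" "\<forall>n\<in>set ms. n \<ge> 1"
    and le: "m \<le> Suc N" "\<forall>n\<in>set ms. n \<le> Suc N"
    by (auto simp: Sr_def mzsv_idx_def length_Suc_conv)
  show "ns \<in> Sr (Suc r) N \<union> (Cons (Suc N)) ` Sr r (Suc N)"
  proof (cases "m = Suc N")
    case True
    then have "ms \<in> Sr r (Suc N)" using len sw pos le by (auto simp: Sr_def mzsv_idx_def)
    then show ?thesis using ns True by auto
  next
    case False
    then have "m \<le> N" using le by simp
    then have "\<forall>n\<in>set ns. n \<le> N" using sw ns by fastforce
    then show ?thesis using ns len sw pos by (auto simp: Sr_def mzsv_idx_def)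
  qed
next
  fix ns assume "ns \<in> Sr (Suc r) N \<union> (Cons (Suc N)) ` Sr r (Suc N)"
  then show "ns \<in> Sr (Suc r) (Suc N)"
    by (auto simp: Sr_def mzsv_idx_def)
qed


definition eT :: "complex \<Rightarrow> nat \<Rightarrow> nat \<Rightarrow> complex" where
  "eT s r N = (\<Sum>ns\<in>Tr r N. \<Prod>n\<leftarrow>ns. of_nat n powr (-s))"
definition hT :: "complex \<Rightarrow> nat \<Rightarrow> nat \<Rightarrow> complex" where
  "hT s r N = (\<Sum>ns\<in>Sr r N. \<Prod>n\<leftarrow>ns. of_nat n powr (-s))"
definition pT :: "complex \<Rightarrow> nat \<Rightarrow> nat \<Rightarrow> complex" where
  "pT s N k = (\<Sum>n\<in>{1..N}. (of_nat n powr (-s))^k)"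

lemma eT_Suc_Suc: "eT s (Suc r) (Suc N) = eT s (Suc r) N + of_nat (Suc N) powr (-s) * eT s r N"
proof -
  have disj: "Tr (Suc r) N \<inter> (Cons (Suc N)) ` Tr r N = {}"
    by (auto simp: Tr_def)
  have "eT s (Suc r) (Suc N) = eT s (Suc r) N + (\<Sum>ns\<in>(Cons (Suc N)) ` Tr r N. \<Prod>n\<leftarrow>ns. of_nat n powr (-s))"
    unfolding eT_def Tr_Suc_Suc by (rule sum.union_disjoint) (auto simp: finite_Tr disj)
  also have "(\<Sum>ns\<in>(Cons (Suc N)) ` Tr r N. \<Prod>n\<leftarrow>ns. of_nat n powr (-s)) = of_nat (Suc N) powr (-s) * eT s r N"
    by (subst sum.reindex) (auto simp: inj_on_def eT_def sum_distrib_left)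
  finally show ?thesis .
qed

lemma hT_Suc_Suc: "hT s (Suc r) (Suc N) = hT s (Suc r) N + of_nat (Suc N) powr (-s) * hT s r (Suc N)"
proof -
  have disj: "Sr (Suc r) N \<inter> (Cons (Suc N)) ` Sr r (Suc N) = {}"
    by (auto simp: Sr_def)
  have "hT s (Suc r) (Suc N) = hT s (Suc r) N + (\<Sum>ns\<in>(Cons (Suc N)) ` Sr r (Suc N). \<Prod>n\<leftarrow>ns. of_nat n powr (-s))"
    unfolding hT_def Sr_Suc_Suc by (rule sum.union_disjoint) (auto simp: finite_Sr disj)
  also have "(\<Sum>ns\<in>(Cons (Suc N)) ` Sr r (Suc N). \<Prod>n\<leftarrow>ns. of_nat n powr (-s)) = of_nat (Suc N) powr (-s) * hT s r (Suc N)"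
    by (subst sum.reindex) (auto simp: inj_on_def hT_def sum_distrib_left)
  finally show ?thesis .
qed

lemma pT_0: "pT s 0 = (\<lambda>k. 0)"
  by (simp add: fun_eq_iff pT_def)

lemma pT_Suc: "pT s (Suc N) = (\<lambda>k. pT s N k + (of_nat (Suc N) powr (-s))^k)"
  by (simp add: fun_eq_iff pT_def)

lemma Pe_zero: "Pe (\<lambda>k. 0) (Suc r) = 0"
  by simp

lemma Ph_zero: "Ph (\<lambda>k. 0) (Suc r) = 0"
  by simp

lemma eT_Pe: "eT s r N = Pe (pT s N) r"
proof (induction N arbitrary: r)
  case 0
  then show ?case
    by (cases r) (simp_all add: eT_def Tr_0 Tr_Suc_0 pT_0 del: Pe.simps, simp_all)
next
  case (Suc N)
  show ?case
  proof (cases r)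
    case 0 then show ?thesis by (simp add: eT_def Tr_0)
  next
    case (Suc r')
    have "eT s (Suc r') (Suc N) = Pe (pT s N) (Suc r') + of_nat (Suc N) powr (-s) * Pe (pT s N) r'"
      using eT_Suc_Suc Suc.IH by simp
    also have "\<dots> = Pe (pT s (Suc N)) (Suc r')"
      unfolding pT_Suc by (rule Pe_shift[symmetric])
    finally show ?thesis using Suc by simp
  qed
qed

lemma hT_Ph: "hT s r N = Ph (pT s N) r"
proof (induction N arbitrary: r)
  case 0
  then show ?case
    by (cases r) (simp_all add: hT_def Sr_0 Sr_Suc_0 pT_0 del: Ph.simps, simp_all)
next
  case (Suc N)
  note IHN = Suc.IH
  show ?case
  proof (induction r)
    case 0 then show ?case by (simp add: hT_def Sr_0)
  next
    case (Suc r')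
    have "hT s (Suc r') (Suc N) = Ph (pT s N) (Suc r') + of_nat (Suc N) powr (-s) * Ph (pT s (Suc N)) r'"
      using hT_Suc_Suc[of s r' N] IHN[of "Suc r'"] Suc.IH by simp
    also have "\<dots> = Ph (pT s (Suc N)) (Suc r')"
      unfolding pT_Suc by (rule Ph_shift[symmetric])
    finally show ?case .
  qed
qed


lemma sum_lists_prod:
  fixes g :: "nat \<Rightarrow> real"
  assumes "finite A"
  shows "(\<Sum>ns\<in>{ns. set ns \<subseteq> A \<and> length ns = r}. prod_list (map g ns)) = (sum g A)^r"
proof (induction r)
  case 0
  have "{ns. set ns \<subseteq> A \<and> length ns = 0} = {[]}" by auto
  then show ?case by simp
next
  case (Suc r)
  define S where "S = {ns. set ns \<subseteq> A \<and> length ns = r}"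
  have fS: "finite S" unfolding S_def by (rule finite_lists_length_eq[OF assms])
  have eq: "{ns. set ns \<subseteq> A \<and> length ns = Suc r} = (\<lambda>(a,ns). a # ns) ` (A \<times> S)"
    by (auto simp: S_def length_Suc_conv image_iff)
  have inj: "inj_on (\<lambda>(a,ns). a # ns) (A \<times> S)" by (auto simp: inj_on_def)
  have "(\<Sum>ns\<in>{ns. set ns \<subseteq> A \<and> length ns = Suc r}. prod_list (map g ns))
      = (\<Sum>(a,ns)\<in>A \<times> S. g a * prod_list (map g ns))"
    unfolding eq by (subst sum.reindex[OF inj]) (simp add: case_prod_unfold)
  also have "\<dots> = (\<Sum>a\<in>A. \<Sum>ns\<in>S. g a * prod_list (map g ns))"
    by (rule sum.cartesian_product[symmetric])
  also have "\<dots> = sum g A * (\<Sum>ns\<in>S. prod_list (map g ns))"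
    by (simp add: sum_product)
  also have "(\<Sum>ns\<in>S. prod_list (map g ns)) = (sum g A)^r"
    using Suc unfolding S_def .
  finally show ?case by simp
qed

lemma norm_prod_list_map: "norm (prod_list (map f ns) :: complex) = prod_list (map (\<lambda>n. norm (f n)) ns)"
  by (induction ns) (simp_all add: norm_mult)

lemma prod_list_map_nonneg: "(\<And>n. (g n :: real) \<ge> 0) \<Longrightarrow> prod_list (map g ns) \<ge> 0"
  by (induction ns) simp_all

lemma finite_lists_bound:
  assumes "finite (F :: nat list set)"
  shows "\<exists>N. \<forall>ns\<in>F. \<forall>n\<in>set ns. n \<le> N"
proof -
  have "finite (\<Union>ns\<in>F. set ns)" using assms by simp
  then obtain k where "(\<Union>ns\<in>F. set ns) \<subseteq> {..<k}" using finite_nat_bounded by blast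
  then show ?thesis by (intro exI[of _ k]) fastforce
qed

definition Lr :: "nat \<Rightarrow> nat list set" where
  "Lr r = {ns. length ns = r \<and> (\<forall>n\<in>set ns. n \<ge> 1)}"

lemma abs_summable_Lr:
  assumes s: "Re s > 1"
  shows "(\<lambda>ns. norm (\<Prod>n\<leftarrow>ns. (of_nat n :: complex) powr (-s))) summable_on Lr r"
proof -
  define g where "g n = real n powr (- Re s)" for n
  have g0: "g n \<ge> 0" for n by (simp add: g_def)
  have sg: "summable g" unfolding g_def using s by (subst summable_real_powr_iff) auto
  have nrm: "norm (\<Prod>n\<leftarrow>ns. (of_nat n :: complex) powr (-s)) = prod_list (map g ns)" for ns
    unfolding norm_prod_list_map g_def using norm_nat_powr[of _ "-s"] by simp
  have "(\<lambda>ns. prod_list (map g ns)) summable_on Lr r"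
  proof (rule nonneg_bdd_above_summable_on)
    show "0 \<le> prod_list (map g ns)" for ns by (rule prod_list_map_nonneg[OF g0])
    show "bdd_above (sum (\<lambda>ns. prod_list (map g ns)) ` {F. F \<subseteq> Lr r \<and> finite F})"
    proof (rule bdd_aboveI2)
      fix F assume F: "F \<in> {F. F \<subseteq> Lr r \<and> finite F}"
      then obtain N where N: "\<forall>ns\<in>F. \<forall>n\<in>set ns. n \<le> N" using finite_lists_bound by blast
      have sub: "F \<subseteq> {ns. set ns \<subseteq> {1..N} \<and> length ns = r}"
        using F N by (auto simp: Lr_def)
      have "sum (\<lambda>ns. prod_list (map g ns)) F \<le> (\<Sum>ns\<in>{ns. set ns \<subseteq> {1..N} \<and> length ns = r}. prod_list (map g ns))"
        by (rule sum_mono2[OF finite_lists_length_eq[OF finite_atLeastAtMost] sub]) (simp add: prod_list_map_nonneg[OF g0])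
      also have "\<dots> = (sum g {1..N})^r" by (rule sum_lists_prod) simp
      also have "\<dots> \<le> (suminf g)^r"
        by (intro power_mono sum_le_suminf[OF sg] sum_nonneg) (auto simp: g0)
      finally show "sum (\<lambda>ns. prod_list (map g ns)) F \<le> (suminf g)^r" .
    qed
  qed
  then show ?thesis by (simp add: nrm)
qed

lemma summable_Lr_subset:
  assumes s: "Re s > 1" and "A \<subseteq> Lr r"
  shows "(\<lambda>ns. \<Prod>n\<leftarrow>ns. (of_nat n :: complex) powr (-s)) summable_on A"
  using summable_on_subset_banach[OF abs_summable_summable[OF abs_summable_Lr[OF s]] assms(2)] .

lemma mzv_sub: "mzv_idx r \<subseteq> Lr r"
  by (auto simp: mzv_idx_def Lr_def Suc_le_eq)
lemma mzsv_sub: "mzsv_idx r \<subseteq> Lr r"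
  by (auto simp: mzsv_idx_def Lr_def)

lemma has_sum_trunc:
  assumes "(f has_sum S) A" and fin: "\<And>N. finite (A \<inter> {ns. \<forall>n\<in>set ns. n \<le> N})"
  shows "(\<lambda>N. sum f (A \<inter> {ns. \<forall>n\<in>set ns. (n::nat) \<le> N})) \<longlonglongrightarrow> S"
proof -
  have lim: "(sum f \<longlongrightarrow> S) (finite_subsets_at_top A)"
    using assms(1) unfolding has_sum_def .
  have "filterlim (\<lambda>N. A \<inter> {ns. \<forall>n\<in>set ns. n \<le> N}) (finite_subsets_at_top A) sequentially"
  proof (subst filterlim_finite_subsets_at_top, intro allI impI)
    fix X assume X: "finite X \<and> X \<subseteq> A"
    then obtain K where K: "\<forall>ns\<in>X. \<forall>n\<in>set ns. n \<le> K" using finite_lists_bound by blast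
    show "\<forall>\<^sub>F N in sequentially. finite (A \<inter> {ns. \<forall>n\<in>set ns. n \<le> N}) \<and> X \<subseteq> A \<inter> {ns. \<forall>n\<in>set ns. n \<le> N} \<and> A \<inter> {ns. \<forall>n\<in>set ns. n \<le> N} \<subseteq> A"
    proof (unfold eventually_sequentially, intro exI[of _ K] allI impI conjI)
      fix N assume N: "K \<le> N"
      show "finite (A \<inter> {ns. \<forall>n\<in>set ns. n \<le> N})" by (rule fin)
      show "X \<subseteq> A \<inter> {ns. \<forall>n\<in>set ns. n \<le> N}"
      proof
        fix ns assume ns: "ns \<in> X"
        then have "\<forall>n\<in>set ns. n \<le> N" using K N by (meson order_trans)
        then show "ns \<in> A \<inter> {ns. \<forall>n\<in>set ns. n \<le> N}" using ns X by blast
      qed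
    qed auto
  qed
  from filterlim_compose[OF lim this] show ?thesis by (simp add: o_def)
qed

lemma eT_tendsto:
  assumes s: "Re s > 1"
  shows "(\<lambda>N. eT s r N) \<longlonglongrightarrow> mzeta r s"
proof -
  have "((\<lambda>ns. \<Prod>n\<leftarrow>ns. (of_nat n :: complex) powr (-s)) has_sum mzeta r s) (mzv_idx r)"
    unfolding mzeta_def by (rule has_sum_infsum[OF summable_Lr_subset[OF s mzv_sub]])
  from has_sum_trunc[OF this] show ?thesis
    using finite_Tr unfolding eT_def Tr_def by simp
qed

lemma hT_tendsto:
  assumes s: "Re s > 1"
  shows "(\<lambda>N. hT s r N) \<longlonglongrightarrow> mzeta_star r s"
proof -
  have "((\<lambda>ns. \<Prod>n\<leftarrow>ns. (of_nat n :: complex) powr (-s)) has_sum mzeta_star r s) (mzsv_idx r)"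
    unfolding mzeta_star_def by (rule has_sum_infsum[OF summable_Lr_subset[OF s mzsv_sub]])
  from has_sum_trunc[OF this] show ?thesis
    using finite_Sr unfolding hT_def Sr_def by simp
qed

lemma powr_nat_power: "m > 0 \<Longrightarrow> ((of_nat n :: complex) powr (-s))^m = of_nat n powr (-(of_nat m * s))"
proof (cases "n = 0")
  case True then show "m > 0 \<Longrightarrow> ?thesis" by (cases m) simp_all
next
  case False
  then show "?thesis" by (simp add: powr_def exp_of_nat_mult[symmetric] algebra_simps)
qed

lemma pT_tendsto:
  assumes s: "Re s > 1" and k: "k \<ge> 1"
  shows "(\<lambda>N. pT s N k) \<longlonglongrightarrow> Zc (of_nat k * s)"
proof -
  define f where "f n = (of_nat n :: complex) powr (-(of_nat k * s))" for n
  have ks: "Re (of_nat k * s) > 1"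
  proof -
    have "Re (of_nat k * s) = real k * Re s" by simp
    moreover have "real k * Re s - Re s = (real k - 1) * Re s" by (simp add: algebra_simps)
    moreover have "(real k - 1) * Re s \<ge> 0" using k s by (intro mult_nonneg_nonneg) auto
    ultimately show ?thesis using s by linarith
  qed
  have "f sums Zc (of_nat k * s)"
    unfolding Zc_eq[OF ks] f_def using zeta_summable[OF ks] by (rule summable_sums)
  then have "(\<lambda>N. \<Sum>n<N. f n) \<longlonglongrightarrow> Zc (of_nat k * s)" by (simp add: sums_def)
  then have "(\<lambda>N. \<Sum>n<Suc N. f n) \<longlonglongrightarrow> Zc (of_nat k * s)" by (rule LIMSEQ_Suc)
  moreover have "(\<Sum>n<Suc N. f n) = pT s N k" for N
  proof -
    have "(\<Sum>n<Suc N. f n) = f 0 + (\<Sum>i<N. f (Suc i))" by (rule sum.lessThan_Suc_shift)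
    also have "(\<Sum>i<N. f (Suc i)) = (\<Sum>n\<in>{Suc 0..N}. f n)" by (rule sum.atLeast1_atMost_eq[symmetric])
    finally show ?thesis unfolding pT_def f_def using powr_nat_power[of k] k by simp
  qed
  ultimately show ?thesis by simp
qed

lemma Pe_tendsto:
  assumes "\<And>k. k < R \<Longrightarrow> (\<lambda>N. q N (Suc k)) \<longlonglongrightarrow> L (Suc k)"
  shows "r \<le> R \<Longrightarrow> (\<lambda>N. Pe (q N) r) \<longlonglongrightarrow> Pe L r"
proof (induction r rule: less_induct)
  case (less r)
  show ?case
  proof (cases r)
    case 0 then show ?thesis by simp
  next
    case (Suc m)
    have "(\<lambda>N. (\<Sum>k\<le>m. (-1)^k * q N (Suc k) * Pe (q N) (m - k)) / of_nat (Suc m))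
        \<longlonglongrightarrow> (\<Sum>k\<le>m. (-1)^k * L (Suc k) * Pe L (m - k)) / of_nat (Suc m)"
      using less Suc by (intro tendsto_intros assms) (auto simp del: of_nat_Suc)
    then show ?thesis using Suc by simp
  qed
qed

lemma Ph_tendsto:
  assumes "\<And>k. k < R \<Longrightarrow> (\<lambda>N. q N (Suc k)) \<longlonglongrightarrow> L (Suc k)"
  shows "r \<le> R \<Longrightarrow> (\<lambda>N. Ph (q N) r) \<longlonglongrightarrow> Ph L r"
proof (induction r rule: less_induct)
  case (less r)
  show ?case
  proof (cases r)
    case 0 then show ?thesis by simp
  next
    case (Suc m)
    have "(\<lambda>N. (\<Sum>k\<le>m. q N (Suc k) * Ph (q N) (m - k)) / of_nat (Suc m))
        \<longlonglongrightarrow> (\<Sum>k\<le>m. L (Suc k) * Ph L (m - k)) / of_nat (Suc m)"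
      using less Suc by (intro tendsto_intros assms) (auto simp del: of_nat_Suc)
    then show ?thesis using Suc by simp
  qed
qed


lemma Pe_hol:
  assumes "\<And>k. k < R \<Longrightarrow> (\<lambda>s. q s (Suc k)) holomorphic_on S"
  shows "r \<le> R \<Longrightarrow> (\<lambda>s. Pe (q s) r) holomorphic_on S"
proof (induction r rule: less_induct)
  case (less r)
  show ?case
  proof (cases r)
    case 0 then show ?thesis by simp
  next
    case (Suc m)
    have IH: "(\<lambda>s. Pe (q s) (m - k)) holomorphic_on S" for k
      using less Suc by auto
    have Q: "(\<lambda>s. q s (Suc k)) holomorphic_on S" if "k \<in> {..m}" for k
      using that Suc less.prems by (intro assms) auto
    have "(\<lambda>s. (\<Sum>k\<le>m. (-1)^k * q s (Suc k) * Pe (q s) (m - k)) / of_nat (Suc m)) holomorphic_on S"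
      by (intro holomorphic_on_divide holomorphic_on_sum holomorphic_on_mult holomorphic_on_const IH Q) (simp_all del: of_nat_Suc)
    then show ?thesis using Suc by simp
  qed
qed

lemma Ph_hol:
  assumes "\<And>k. k < R \<Longrightarrow> (\<lambda>s. q s (Suc k)) holomorphic_on S"
  shows "r \<le> R \<Longrightarrow> (\<lambda>s. Ph (q s) r) holomorphic_on S"
proof (induction r rule: less_induct)
  case (less r)
  show ?case
  proof (cases r)
    case 0 then show ?thesis by simp
  next
    case (Suc m)
    have IH: "(\<lambda>s. Ph (q s) (m - k)) holomorphic_on S" for k
      using less Suc by auto
    have Q: "(\<lambda>s. q s (Suc k)) holomorphic_on S" if "k \<in> {..m}" for k
      using that Suc less.prems by (intro assms) auto
    have "(\<lambda>s. (\<Sum>k\<le>m. q s (Suc k) * Ph (q s) (m - k)) / of_nat (Suc m)) holomorphic_on S"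
      by (intro holomorphic_on_divide holomorphic_on_sum holomorphic_on_mult holomorphic_on_const IH Q) (simp_all del: of_nat_Suc)
    then show ?thesis using Suc by simp
  qed
qed


theorem corollary4p2:
  fixes r :: nat
  assumes "r \<ge> 1"
  shows "cont_value_at_0 (mzeta r)
           ((-1) ^ r / 4 ^ r * of_nat ((2 * r) choose r))
       \<and> cont_value_at_0 (mzeta_star r)
           (- 1 / (of_nat r * 2 ^ (2 * r - 1)) * of_nat ((2 * r - 2) choose (r - 1)))"
proof -
  have r0: "real r > 0" using assms by simp
  define V where "V = {s::complex. Re s > -1/(2 * real r)} - (\<lambda>k. 1 / of_nat k) ` {1..r}"
  have openV: "open V"
    unfolding V_def by (intro open_Diff open_halfspace_Re_gt finite_imp_closed finite_imageI) auto
  have connV: "connected V"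
    unfolding V_def
    by (intro connected_open_diff_countable open_halfspace_Re_gt convex_connected convex_halfspace_Re_gt
        countable_finite finite_imageI) auto
  have V0: "0 \<in> V" unfolding V_def using r0 by auto
  have Vhalf: "{s. Re s > 1} \<subseteq> V"
  proof
    fix s :: complex assume s: "s \<in> {s. Re s > 1}"
    have "1/(2 * real r) > 0" using r0 by simp
    moreover have "Re s > 1" using s by simp
    ultimately have "Re s > -1/(2 * real r)" by linarith
    moreover have "s \<noteq> 1 / of_nat k" if "k \<in> {1..r}" for k
    proof
      assume "s = 1 / of_nat k"
      then have "Re s = 1 / real k" by simp
      also have "\<dots> \<le> 1" using that by simp
      finally show False using s by simp
    qed
    ultimately show "s \<in> V" unfolding V_def by blast
  qed
  have inDZ: "of_nat k * s \<in> DZ" if s: "s \<in> V" and k: "k \<in> {1..r}" for s k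
  proof -
    have re: "Re s > -1/(2 * real r)" and ne: "s \<noteq> 1 / of_nat k"
      using s k unfolding V_def by auto
    have kp: "real k > 0" "real k \<le> real r" using k by auto
    have a: "real k * Re s > real k * (-1/(2 * real r))"
      using re kp by (intro mult_strict_left_mono) auto
    have b: "real k * (-1/(2 * real r)) \<ge> -1/2"
      using kp r0 by (simp add: field_simps)
    have "Re (of_nat k * s) > -1/2" using a b by simp
    moreover have "of_nat k * s \<noteq> 1"
    proof
      assume "of_nat k * s = 1"
      then have "s = 1 / of_nat k" using kp by (simp add: field_simps)
      then show False using ne by simp
    qed
    ultimately show ?thesis unfolding DZ_def by auto
  qed
  define q where "q s k = Zc (of_nat k * s)" for s k
  have qhol: "(\<lambda>s. q s (Suc k)) holomorphic_on V" if "k < r" for k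
  proof -
    have "(Zc \<circ> (\<lambda>s. of_nat (Suc k) * s)) holomorphic_on V"
    proof (rule holomorphic_on_compose_gen[OF _ Zc_hol])
      show "(\<lambda>s. of_nat (Suc k) * s) holomorphic_on V" by (intro holomorphic_intros)
      show "(\<lambda>s. of_nat (Suc k) * s) ` V \<subseteq> DZ"
      proof
        fix y assume "y \<in> (\<lambda>s. of_nat (Suc k) * s) ` V"
        then obtain s where "s \<in> V" "y = of_nat (Suc k) * s" by blast
        moreover have "Suc k \<in> {1..r}" using that by simp
        ultimately show "y \<in> DZ" using inDZ by blast
      qed
    qed
    then show ?thesis by (simp add: q_def o_def)
  qed
  have qlim: "(\<lambda>N. pT s N (Suc k)) \<longlonglongrightarrow> q s (Suc k)" if "Re s > 1" for s k
    unfolding q_def by (rule pT_tendsto[OF that]) simp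
  have q0: "q 0 = (\<lambda>k. -1/2)" by (simp add: q_def fun_eq_iff Zc_0)
  have part1: "cont_value_at_0 (mzeta r) ((-1) ^ r / 4 ^ r * of_nat ((2 * r) choose r))"
    unfolding cont_value_at_0_def
  proof (intro exI[of _ V] exI[of _ "\<lambda>s. Pe (q s) r"] conjI allI impI)
    show "open V" "connected V" "0 \<in> V" "{s. Re s > 1} \<subseteq> V" by fact+
    show "(\<lambda>s. Pe (q s) r) holomorphic_on V" by (rule Pe_hol[where q=q and R=r and S=V, OF qhol]) auto
    show "Pe (q s) r = mzeta r s" if "Re s > 1" for s
    proof -
      have "(\<lambda>N. Pe (pT s N) r) \<longlonglongrightarrow> Pe (q s) r"
        by (rule Pe_tendsto[where q="\<lambda>N. pT s N" and L="q s" and R=r, OF qlim[OF that]]) auto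
      moreover have "(\<lambda>N. Pe (pT s N) r) \<longlonglongrightarrow> mzeta r s"
        using eT_tendsto[OF that, of r] by (simp add: eT_Pe)
      ultimately show ?thesis by (rule LIMSEQ_unique)
    qed
    show "Pe (q 0) r = (-1) ^ r / 4 ^ r * of_nat ((2 * r) choose r)"
      unfolding q0 Pe_const cb_def by simp
  qed
  have part2: "cont_value_at_0 (mzeta_star r)
           (- 1 / (of_nat r * 2 ^ (2 * r - 1)) * of_nat ((2 * r - 2) choose (r - 1)))"
    unfolding cont_value_at_0_def
  proof (intro exI[of _ V] exI[of _ "\<lambda>s. Ph (q s) r"] conjI allI impI)
    show "open V" "connected V" "0 \<in> V" "{s. Re s > 1} \<subseteq> V" by fact+
    show "(\<lambda>s. Ph (q s) r) holomorphic_on V" by (rule Ph_hol[where q=q and R=r and S=V, OF qhol]) auto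
    show "Ph (q s) r = mzeta_star r s" if "Re s > 1" for s
    proof -
      have "(\<lambda>N. Ph (pT s N) r) \<longlonglongrightarrow> Ph (q s) r"
        by (rule Ph_tendsto[where q="\<lambda>N. pT s N" and L="q s" and R=r, OF qlim[OF that]]) auto
      moreover have "(\<lambda>N. Ph (pT s N) r) \<longlonglongrightarrow> mzeta_star r s"
        using hT_tendsto[OF that, of r] by (simp add: hT_Ph)
      ultimately show ?thesis by (rule LIMSEQ_unique)
    qed
    obtain m where m: "r = Suc m" using assms by (cases r) auto
    have "(2::complex) ^ (2 * r - 1) = 2 * 4 ^ m"
      by (simp add: m power_mult)
    moreover have "2 * r - 2 = 2 * m" "r - 1 = m" using m by auto
    ultimately show "Ph (q 0) r = - 1 / (of_nat r * 2 ^ (2 * r - 1)) * of_nat ((2 * r - 2) choose (r - 1))"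
      unfolding q0 Ph_const Hc_def cb_def using m by (simp add: field_simps del: of_nat_Suc)
  qed
  show ?thesis using part1 part2 by blast
qed

end
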